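(* Fix $\alpha\ge0$ and set $\mathsf{INR}=\mathsf{SNR}^\alpha$. Assume that for all sufficiently large $\mathsf{SNR}$ the equation $$2\mathsf{SNR}^{\frac{3\alpha+1}{2}}\rho^4+\mathsf{SNR}^{\alpha}\rho^3-4\left(\mathsf{SNR}^{\frac{3\alpha+1}{2}}+\mathsf{SNR}^{\frac{\alpha+1}{2}}\right)\rho^2-(2+\mathsf{SNR}+2\mathsf{SNR}^\alpha)\rho+2\left(\mathsf{SNR}^{\frac{3\alpha+1}{2}}+\mathsf{SNR}^{\frac{\alpha+1}{2}}\right)=0$$ has a unique solution $\rho^*=\rho^*(\mathsf{SNR})\in(0,1)$, and define $$R_{\mathsf{sym}}(\mathsf{SNR})=\log\left(\frac{1+\mathsf{SNR}+\mathsf{SNR}^\alpha+2\rho^*\mathsf{SNR}^{\frac{\alpha+1}{2}}}{1+(1-\rho^{*2})\mathsf{SNR}^\alpha}\right).$$ Then $\lim_{\mathsf{SNR}\to\infty}R_{\mathsf{sym}}(\mathsf{SNR})/\log\mathsf{SNR}=\underline{d}(\alpha)$, where $\underline{d}(\alpha)=1-\alpha$ for $0\le\alpha<\frac13$, $\underline{d}(\alpha)=\frac{3-\alpha}{4}$ for $\frac13\le\alpha<1$, and $\underline{d}(\alpha)=\frac{1+\alpha}{4}$ for $\alpha\ge1$.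
   Context: $R_{\mathsf{sym}}(\mathsf{SNR})$ is the symmetric rate of Kramer's feedback scheme for the symmetric two-user Gaussian interference channel with feedback, with $\mathsf{SNR}$ the direct-link and $\mathsf{INR}$ the cross-link signal-to-noise ratio. Logarithms base 2. *)

theory Defs
  imports Complex_Main
begin

definition kramer_eq :: "real \<Rightarrow> real \<Rightarrow> real \<Rightarrow> bool" where
  "kramer_eq \<alpha> snr \<rho> \<longleftrightarrow>
     2 * snr powr ((3*\<alpha>+1)/2) * \<rho>^4 + snr powr \<alpha> * \<rho>^3
     - 4 * (snr powr ((3*\<alpha>+1)/2) + snr powr ((\<alpha>+1)/2)) * \<rho>^2
     - (2 + snr + 2 * snr powr \<alpha>) * \<rho>
     + 2 * (snr powr ((3*\<alpha>+1)/2) + snr powr ((\<alpha>+1)/2)) = 0"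

definition rho_star :: "real \<Rightarrow> real \<Rightarrow> real" where
  "rho_star \<alpha> snr = (THE \<rho>. 0 < \<rho> \<and> \<rho> < 1 \<and> kramer_eq \<alpha> snr \<rho>)"

definition R_sym :: "real \<Rightarrow> real \<Rightarrow> real" where
  "R_sym \<alpha> snr = (let \<rho> = rho_star \<alpha> snr in
     log 2 ((1 + snr + snr powr \<alpha> + 2 * \<rho> * snr powr ((\<alpha>+1)/2))
            / (1 + (1 - \<rho>^2) * snr powr \<alpha>)))"

definition d_low :: "real \<Rightarrow> real" where
  "d_low \<alpha> = (if \<alpha> < 1/3 then 1 - \<alpha> else if \<alpha> < 1 then (3 - \<alpha>)/4 else (1 + \<alpha>)/4)"

end

theory Submission
  imports Defs
begin

lemma ev_pow:
  fixes p q c :: real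
  assumes "p < q"
  shows "\<forall>\<^sub>F S in at_top. c * S powr p \<le> S powr q"
proof -
  have "((\<lambda>S::real. S powr (p - q)) \<longlongrightarrow> 0) at_top"
    using assms by (intro tendsto_neg_powr filterlim_ident) auto
  then have "\<forall>\<^sub>F S in at_top. S powr (p - q) < 1 / (\<bar>c\<bar> + 1)"
    by (rule order_tendstoD) simp
  moreover have "\<forall>\<^sub>F S::real in at_top. S > 0" by (rule eventually_gt_at_top)
  ultimately show ?thesis
  proof eventually_elim
    case (elim S)
    have e: "S powr p = S powr (p - q) * S powr q"
      by (simp add: powr_add[symmetric])
    have "c * S powr p \<le> \<bar>c\<bar> * S powr p" by (simp add: mult_right_mono)
    also have "\<dots> = \<bar>c\<bar> * S powr (p - q) * S powr q" by (simp add: e)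
    also have "\<dots> \<le> \<bar>c\<bar> * (1 / (\<bar>c\<bar> + 1)) * S powr q"
      using elim by (intro mult_right_mono mult_left_mono) auto
    also have "\<dots> \<le> 1 * S powr q"
      by (intro mult_right_mono) (auto simp: field_simps)
    finally show ?case by simp
  qed
qed

definition kf :: "real \<Rightarrow> real \<Rightarrow> real \<Rightarrow> real" where
  "kf \<alpha> snr \<rho> =
     2 * snr powr ((3*\<alpha>+1)/2) * \<rho>^4 + snr powr \<alpha> * \<rho>^3
     - 4 * (snr powr ((3*\<alpha>+1)/2) + snr powr ((\<alpha>+1)/2)) * \<rho>^2
     - (2 + snr + 2 * snr powr \<alpha>) * \<rho>
     + 2 * (snr powr ((3*\<alpha>+1)/2) + snr powr ((\<alpha>+1)/2))"

lemma kf_eq: "kramer_eq a S r \<longleftrightarrow> kf a S r = 0"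
  unfolding kramer_eq_def kf_def by simp

lemma kf_cont: "isCont (kf a S) x"
  unfolding kf_def by (intro continuous_intros)

lemma rho_star_props:
  assumes "\<exists>!\<rho>. 0 < \<rho> \<and> \<rho> < 1 \<and> kramer_eq a S \<rho>"
  shows "0 < rho_star a S \<and> rho_star a S < 1 \<and> kramer_eq a S (rho_star a S)"
  unfolding rho_star_def using theI'[OF assms] .

lemma root_lt:
  assumes u: "\<exists>!\<rho>. 0 < \<rho> \<and> \<rho> < 1 \<and> kramer_eq a S \<rho>"
    and S: "S > 0" and r: "0 < r" "r < 1" and neg: "kf a S r < 0"
  shows "rho_star a S < r"
proof -
  have f0: "kf a S 0 > 0" unfolding kf_def using S by (simp add: power_eq_if) (smt (verit) powr_gt_zero)
  obtain x where x: "0 \<le> x" "x \<le> r" "kf a S x = 0"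
    using IVT2[of "kf a S" r 0 0] neg f0 r kf_cont by force
  have "x \<noteq> 0" using x f0 by auto
  moreover have "x \<noteq> r" using x neg by auto
  ultimately have xx: "0 < x \<and> x < 1 \<and> kramer_eq a S x" using x r by (auto simp: kf_eq)
  have "rho_star a S = x"
    using rho_star_props[OF u] xx u by blast
  then show ?thesis using x \<open>x \<noteq> r\<close> by simp
qed

lemma root_gt:
  assumes u: "\<exists>!\<rho>. 0 < \<rho> \<and> \<rho> < 1 \<and> kramer_eq a S \<rho>"
    and S: "S > 0" and r: "0 < r" "r < 1" and pos: "kf a S r > 0"
  shows "r < rho_star a S"
proof -
  have f1: "kf a S 1 < 0" unfolding kf_def using S
    by (simp add: algebra_simps) (smt (verit) powr_gt_zero)
  obtain x where x: "r \<le> x" "x \<le> 1" "kf a S x = 0"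
    using IVT2[of "kf a S" 1 0 r] pos f1 r kf_cont by force
  have "x \<noteq> 1" using x f1 by auto
  moreover have "x \<noteq> r" using x pos by auto
  ultimately have xx: "0 < x \<and> x < 1 \<and> kramer_eq a S x" using x r by (auto simp: kf_eq)
  have "rho_star a S = x"
    using rho_star_props[OF u] xx u by blast
  then show ?thesis using x \<open>x \<noteq> r\<close> by simp
qed


lemma poly_up:
  fixes A B C S r :: real
  assumes "A \<ge> 0" "B \<ge> 0" "C \<ge> 0" "S \<ge> 0" "0 \<le> r" "r \<le> 1" "1/2 \<le> r^2"
  shows "2*A*r^4 + C*r^3 - 4*(A+B)*r^2 - (2+S+2*C)*r + 2*(A+B) \<le> 2*A*(1-r^2)^2 - C/2 - S/2 - 1"
proof -
  have e: "2*A*r^4 + C*r^3 - 4*(A+B)*r^2 - (2+S+2*C)*r + 2*(A+B)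
      = 2*A*(1-r^2)^2 + C*r^3 - 4*B*r^2 - (2+S+2*C)*r + 2*B"
    by (simp add: algebra_simps power2_eq_square power4_eq_xxxx)
  have h1: "C*r^3 \<le> C*r^2"
    using assms by (intro mult_left_mono) (auto simp: power_decreasing)
  have h2: "(2+S+2*C)*r^2 \<le> (2+S+2*C)*r"
    using assms by (intro mult_left_mono) (auto simp: power2_eq_square mult_left_le_one_le)
  have h3: "(C+4*B+2+S) * (1/2) \<le> (C+4*B+2+S) * r^2"
    using assms by (intro mult_left_mono) auto
  have h4: "C*r^3 - 4*B*r^2 - (2+S+2*C)*r + 2*B \<le> C*r^2 - 4*B*r^2 - (2+S+2*C)*r^2 + 2*B"
    using h1 h2 by linarith
  have h5: "C*r^2 - 4*B*r^2 - (2+S+2*C)*r^2 + 2*B = 2*B - (C+4*B+2+S) * r^2"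
    by (simp add: algebra_simps)
  have h6: "2*B - (C+4*B+2+S) * r^2 \<le> - C/2 - S/2 - 1" using h3 by (simp add: algebra_simps)
  show ?thesis unfolding e using h4 h5 h6 by linarith
qed

lemma poly_low:
  fixes A B C S r :: real
  assumes "A \<ge> 0" "B \<ge> 0" "C \<ge> 0" "S \<ge> 0" "0 \<le> r" "r \<le> 1"
  shows "2*A*r^4 + C*r^3 - 4*(A+B)*r^2 - (2+S+2*C)*r + 2*(A+B) \<ge> 2*A*(1-r^2)^2 - 2*B - 2 - S - 2*C"
proof -
  have e: "2*A*r^4 + C*r^3 - 4*(A+B)*r^2 - (2+S+2*C)*r + 2*(A+B)
      = 2*A*(1-r^2)^2 + C*r^3 - 4*B*r^2 - (2+S+2*C)*r + 2*B"
    by (simp add: algebra_simps power2_eq_square power4_eq_xxxx)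
  have h1: "0 \<le> C*r^3" using assms by simp
  have h2: "(2+S+2*C)*r \<le> (2+S+2*C)"
    using assms by (intro mult_left_le) auto
  have h3: "B * r^2 \<le> B"
    using assms by (intro mult_left_le) (auto simp: power_le_one)
  have h4: "C*r^3 - 4*B*r^2 - (2+S+2*C)*r + 2*B \<ge> - 4*B - (2+S+2*C) + 2*B"
    using h1 h2 h3 by linarith
  show ?thesis unfolding e using h4 by linarith
qed


definition Qf :: "real \<Rightarrow> real \<Rightarrow> real" where
  "Qf a S = (let \<rho> = rho_star a S in (1 + S + S powr a + 2 * \<rho> * S powr ((a+1)/2))
            / (1 + (1 - \<rho>^2) * S powr a))"

lemma kf_alt: "kf a S r = 2*(S powr ((3*a+1)/2))*r^4 + (S powr a)*r^3
   - 4*((S powr ((3*a+1)/2))+(S powr ((a+1)/2)))*r^2 - (2+S+2*(S powr a))*r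
   + 2*((S powr ((3*a+1)/2))+(S powr ((a+1)/2)))"
  unfolding kf_def by simp

lemma key_small:
  fixes a :: real
  assumes a0: "a \<ge> 0" and a1: "a < 1/3"
    and ev: "eventually (\<lambda>snr. \<exists>!\<rho>. 0 < \<rho> \<and> \<rho> < 1 \<and> kramer_eq a snr \<rho>) at_top"
    and e: "\<epsilon> > 0"
  shows "\<forall>\<^sub>F S in at_top. S powr (d_low a - \<epsilon>) \<le> Qf a S \<and> Qf a S \<le> S powr (d_low a + \<epsilon>)"
proof -
  have d: "d_low a = 1 - a" using a1 by (simp add: d_low_def)
  have E1: "\<forall>\<^sub>F S in at_top. 5 * S powr ((3*a+1)/2) \<le> S powr 1" using a1 by (intro ev_pow) simp
  have E2: "\<forall>\<^sub>F S in at_top. 5 * S powr ((a+1)/2) \<le> S powr 1" using a1 by (intro ev_pow) simp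
  have E3: "\<forall>\<^sub>F S in at_top. 2 * S powr (1 - a - \<epsilon>) \<le> S powr (1 - a)" using e by (intro ev_pow) simp
  have E4: "\<forall>\<^sub>F S in at_top. (20/3) * S powr (1 - a) \<le> S powr (1 - a + \<epsilon>)" using e by (intro ev_pow) simp
  have E0: "\<forall>\<^sub>F S::real in at_top. S \<ge> 1" by (rule eventually_ge_at_top)
  from E0 E1 E2 E3 E4 ev show ?thesis unfolding d
  proof eventually_elim
    case (elim S)
    define A where "A = S powr ((3*a+1)/2)"
    define B where "B = S powr ((a+1)/2)"
    define C where "C = S powr a"
    define \<rho> where "\<rho> = rho_star a S"
    have S0: "S > 0" using elim by simp
    have S1: "S powr 1 = S" using S0 by simp
    have A0: "A \<ge> 0" "B \<ge> 0" unfolding A_def B_def by auto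
    have C1: "C \<ge> 1" unfolding C_def using elim a0 by (intro ge_one_powr_ge_zero) auto
    have CS: "C \<le> S" unfolding C_def using elim a1 powr_mono[of a 1 S] S1 by simp
    have A5: "5*A \<le> S" "5*B \<le> S" using elim S1 unfolding A_def B_def by auto
    have rp: "0 < \<rho>" "\<rho> < 1" using rho_star_props[OF elim(6)] \<rho>_def by auto
    have "kf a S (1/2) = (9/8)*A + B - (7/8)*C - 1 - S/2"
      unfolding kf_alt A_def B_def C_def by (simp add: power_divide field_simps)
    also have "\<dots> < 0" using A5 C1 A0 by linarith
    finally have "\<rho> < 1/2" unfolding \<rho>_def using root_lt[OF elim(6) S0, of "1/2"] by simp
    then have "\<rho>*\<rho> < (1/2)*(1/2)" using rp by (intro mult_strict_mono) auto
    then have r2: "\<rho>^2 < 1/4" by (simp add: power2_eq_square)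
    define N where "N = 1 + S + C + 2*\<rho>*B"
    define D where "D = 1 + (1 - \<rho>^2) * C"
    have Q: "Qf a S = N / D" unfolding Qf_def N_def D_def \<rho>_def C_def B_def Let_def by simp
    have N1: "S \<le> N" unfolding N_def using rp A0 C1 by simp
    have "2*\<rho>*B \<le> 2*B" using rp A0 by (simp add: mult_left_le_one_le)
    then have N2: "N \<le> 5*S" unfolding N_def using A5 CS elim by linarith
    have "(3/4)*C \<le> (1-\<rho>^2)*C" using r2 C1 by (intro mult_right_mono) auto
    then have D1: "(3/4)*C \<le> D" unfolding D_def by simp
    have "(1-\<rho>^2)*C \<le> C" using rp C1 by (simp add: mult_left_le_one_le)
    then have D2: "D \<le> 2*C" unfolding D_def using C1 by linarith
    have SC: "S powr (1-a) = S / C" unfolding C_def using S0 by (simp add: powr_diff S1)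
    have Cp: "C > 0" using C1 by simp
    have "S powr (1-a-\<epsilon>) \<le> S powr (1-a) / 2" using elim by simp
    also have "\<dots> = S / (2*C)" using SC by simp
    also have "\<dots> \<le> N / D" using N1 D2 Cp D1 S0
      by (intro frac_le) auto
    finally have L: "S powr (1-a-\<epsilon>) \<le> Qf a S" using Q by simp
    have "N / D \<le> (5*S) / ((3/4)*C)" using N2 D1 Cp N1 S0
      by (intro frac_le) auto
    also have "\<dots> = (20/3) * S powr (1-a)" using SC Cp by (simp add: field_simps)
    also have "\<dots> \<le> S powr (1-a+\<epsilon>)" using elim by simp
    finally have U: "Qf a S \<le> S powr (1-a+\<epsilon>)" using Q by simp
    show ?case using L U by (simp add: algebra_simps)
  qed
qed


lemma key_big:
  fixes a :: real
  assumes a1: "a \<ge> 1/3"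
    and ev: "eventually (\<lambda>snr. \<exists>!\<rho>. 0 < \<rho> \<and> \<rho> < 1 \<and> kramer_eq a snr \<rho>) at_top"
    and e: "\<epsilon> > 0"
  shows "\<forall>\<^sub>F S in at_top. S powr (d_low a - \<epsilon>) \<le> Qf a S \<and> Qf a S \<le> S powr (d_low a + \<epsilon>)"
proof -
  define m where "m = max a 1"
  define \<delta> where "\<delta> = \<epsilon> / 4"
  define el where "el = -(3*a+1)/4 + m/2 - \<delta>"
  define eh where "eh = -(3*a+1)/4 + m/2 + \<delta>"
  define e0 where "e0 = a - (3*a+1)/4 + m/2"
  define d where "d = m - e0"
  have dp: "\<delta> > 0" "\<delta> < \<epsilon>" using e by (auto simp: \<delta>_def)
  have dd: "d_low a = d" unfolding d_def e0_def m_def d_low_def using a1 by (auto simp: field_simps)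
  have a0: "a \<ge> 0" using a1 by simp
  have m1: "m \<ge> 1" "m \<ge> a" unfolding m_def by auto
  have el0: "el < 0" unfolding el_def m_def using a1 dp by (auto simp: max_def field_simps)
  have e00: "e0 + \<delta> \<ge> 0" unfolding e0_def using m1 a0 dp by (auto simp: field_simps)
  have E1: "\<forall>\<^sub>F S in at_top. 2 * S powr el \<le> S powr 0" using el0 by (intro ev_pow) simp
  have E2: "\<forall>\<^sub>F S in at_top. 4 * S powr (m - 2*\<delta>) \<le> S powr m" using dp by (intro ev_pow) simp
  have E3: "\<forall>\<^sub>F S in at_top. 8 * S powr m \<le> S powr (m + 2*\<delta>)" using dp by (intro ev_pow) simp
  have E4: "\<forall>\<^sub>F S in at_top. 2 * S powr (d - \<epsilon>) \<le> S powr (d - \<delta>)" using dp by (intro ev_pow) simp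
  have E5: "\<forall>\<^sub>F S in at_top. 5 * S powr (d + \<delta>) \<le> S powr (d + \<epsilon>)" using dp by (intro ev_pow) simp
  have E0: "\<forall>\<^sub>F S::real in at_top. S \<ge> 1" by (rule eventually_ge_at_top)
  from E0 E1 E2 E3 E4 E5 ev show ?thesis unfolding dd
  proof eventually_elim
    case (elim S)
    define A where "A = S powr ((3*a+1)/2)"
    define B where "B = S powr ((a+1)/2)"
    define C where "C = S powr a"
    define M where "M = S powr m"
    define \<rho> where "\<rho> = rho_star a S"
    have S0: "S > 0" using elim by simp
    have S1: "S powr 1 = S" using S0 by simp
    have A0: "A \<ge> 0" "B \<ge> 0" "C \<ge> 0" unfolding A_def B_def C_def by auto
    have C1: "C \<ge> 1" unfolding C_def using elim a0 by (intro ge_one_powr_ge_zero) auto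
    have CM: "C \<le> M" unfolding C_def M_def using elim m1 by (intro powr_mono) auto
    have SM: "S \<le> M" unfolding M_def using elim m1 powr_mono[of 1 m S] S1 by simp
    have BM: "B \<le> M" unfolding B_def M_def using elim m1 by (intro powr_mono) auto
    have MCS: "M \<le> C + S" unfolding M_def C_def m_def using S1 S0
      by (cases "a \<le> 1") (auto simp: max_def)
    have rp: "0 < \<rho>" "\<rho> < 1" using rho_star_props[OF elim(7)] \<rho>_def by auto
    define u where "u = 1 - \<rho>^2"
    have u01: "0 < u" "u < 1" unfolding u_def using rp by (auto simp: power_less_one_iff)
    define ul where "ul = S powr el"
    have ul: "0 < ul" "ul \<le> 1/2" unfolding ul_def using elim S0 by auto
    define r where "r = sqrt (1 - ul)"
    have r2: "r^2 = 1 - ul" unfolding r_def using ul by simp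
    have r01: "0 < r" "r < 1" unfolding r_def using ul by auto
    have "kf a S r \<le> 2*A*(1-r^2)^2 - C/2 - S/2 - 1"
      unfolding kf_alt A_def[symmetric] B_def[symmetric] C_def[symmetric]
      using A0 S0 r01 r2 ul by (intro poly_up) auto
    also have "2*A*(1-r^2)^2 = 2 * S powr (m - 2*\<delta>)"
    proof -
      have "A*(ul*ul) = S powr ((3*a+1)/2 + el + el)" by (simp only: A_def ul_def powr_add mult.assoc)
      also have "(3*a+1)/2 + el + el = m - 2*\<delta>" by (simp add: el_def field_simps)
      finally show ?thesis unfolding r2 by (simp add: power2_eq_square)
    qed
    finally have kfr: "kf a S r \<le> 2 * S powr (m - 2 * \<delta>) - C/2 - S/2 - 1" .
    have h4: "4 * S powr (m - 2*\<delta>) \<le> C + S" using elim(3) MCS unfolding M_def by linarith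
    have "kf a S r < 0" using kfr h4 by linarith
    then have "\<rho> < r" unfolding \<rho>_def using root_lt[OF elim(7) S0 r01] by simp
    then have "\<rho>*\<rho> < r*r" using rp by (intro mult_strict_mono) auto
    then have uL: "ul < u" unfolding u_def using r2 by (simp add: power2_eq_square)
    define uh where "uh = S powr eh"
    have uH: "u \<le> uh"
    proof (cases "uh < 1")
      case False then show ?thesis using u01 by simp
    next
      case True
      have uh0: "0 < uh" unfolding uh_def using S0 by simp
      define r' where "r' = sqrt (1 - uh)"
      have r2': "r'^2 = 1 - uh" unfolding r'_def using True by simp
      have r01': "0 < r'" "r' < 1" unfolding r'_def using True uh0 by auto
      have "2*A*(1-r'^2)^2 = 2 * S powr (m + 2*\<delta>)"
      proof -
        have "A*(uh*uh) = S powr ((3*a+1)/2 + eh + eh)" by (simp only: A_def uh_def powr_add mult.assoc)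
        also have "(3*a+1)/2 + eh + eh = m + 2*\<delta>" by (simp add: eh_def field_simps)
        finally show ?thesis unfolding r2' by (simp add: power2_eq_square)
      qed
      moreover have "kf a S r' \<ge> 2*A*(1-r'^2)^2 - 2*B - 2 - S - 2*C"
        unfolding kf_alt A_def[symmetric] B_def[symmetric] C_def[symmetric]
        using A0 S0 r01' by (intro poly_low) auto
      moreover have "1 \<le> M" using C1 CM by simp
      ultimately have "kf a S r' > 0" using elim BM SM CM unfolding M_def by linarith
      then have "r' < \<rho>" unfolding \<rho>_def using root_gt[OF elim(7) S0 r01'] by simp
      then have "r'*r' < \<rho>*\<rho>" using r01' by (intro mult_strict_mono) auto
      then show ?thesis unfolding u_def using r2' by (simp add: power2_eq_square)
    qed
    define N where "N = 1 + S + C + 2*\<rho>*B"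
    define D where "D = 1 + u * C"
    have Q: "Qf a S = N / D" unfolding Qf_def N_def D_def \<rho>_def C_def B_def u_def Let_def by simp
    have "0 \<le> 2*\<rho>*B" using rp A0 by simp
    then have N1: "M \<le> N" unfolding N_def using MCS by linarith
    have "2*\<rho>*B \<le> 2*B" using rp A0 by (simp add: mult_left_le_one_le)
    then have N2: "N \<le> 5*M" unfolding N_def using BM CM SM C1 by linarith
    have "ul * C \<le> u * C" using uL A0 by (intro mult_right_mono) auto
    moreover have "ul * C = S powr (e0 - \<delta>)"
    proof -
      have "ul * C = S powr (el + a)" by (simp add: ul_def C_def powr_add)
      also have "el + a = e0 - \<delta>" by (simp add: el_def e0_def field_simps)
      finally show ?thesis .
    qed
    ultimately have D1: "S powr (e0 - \<delta>) \<le> D" unfolding D_def by linarith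
    have "u * C \<le> uh * C" using uH A0 by (intro mult_right_mono) auto
    moreover have "uh * C = S powr (e0 + \<delta>)"
    proof -
      have "uh * C = S powr (eh + a)" by (simp add: uh_def C_def powr_add)
      also have "eh + a = e0 + \<delta>" by (simp add: eh_def e0_def field_simps)
      finally show ?thesis .
    qed
    moreover have "1 \<le> S powr (e0 + \<delta>)" using elim e00 by (intro ge_one_powr_ge_zero) auto
    ultimately have D2: "D \<le> 2 * S powr (e0 + \<delta>)" unfolding D_def by linarith
    have Mp: "M > 0" unfolding M_def using S0 by simp
    have "0 < S powr (e0 - \<delta>)" using S0 by simp
    then have Dp: "D > 0" using D1 by linarith
    have dl: "S powr (d - \<delta>) = M / S powr (e0 + \<delta>)"
    proof -
      have "d - \<delta> = m - (e0 + \<delta>)" by (simp add: d_def)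
      then show ?thesis unfolding M_def by (simp only: powr_diff)
    qed
    have dh: "S powr (d + \<delta>) = M / S powr (e0 - \<delta>)"
    proof -
      have "d + \<delta> = m - (e0 - \<delta>)" by (simp add: d_def)
      then show ?thesis unfolding M_def by (simp only: powr_diff)
    qed
    have "S powr (d-\<epsilon>) \<le> S powr (d - \<delta>) / 2" using elim by simp
    also have "\<dots> = M / (2 * S powr (e0 + \<delta>))" using dl by simp
    also have "\<dots> \<le> N / D" using N1 D2 Mp Dp
      by (intro frac_le) auto
    finally have L: "S powr (d-\<epsilon>) \<le> Qf a S" using Q by simp
    have "N / D \<le> (5*M) / (S powr (e0 - \<delta>))" using N2 D1 N1 Mp S0
      by (intro frac_le) auto
    also have "\<dots> = 5 * S powr (d + \<delta>)" using dh by simp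
    also have "\<dots> \<le> S powr (d+\<epsilon>)" using elim by simp
    finally have U: "Qf a S \<le> S powr (d+\<epsilon>)" using Q by simp
    show ?case using L U by simp
  qed
qed


lemma key_all:
  fixes a :: real
  assumes a0: "a \<ge> 0"
    and ev: "eventually (\<lambda>snr. \<exists>!\<rho>. 0 < \<rho> \<and> \<rho> < 1 \<and> kramer_eq a snr \<rho>) at_top"
    and e: "\<epsilon> > 0"
  shows "\<forall>\<^sub>F S in at_top. S > 1 \<and> S powr (d_low a - \<epsilon>) \<le> Qf a S \<and> Qf a S \<le> S powr (d_low a + \<epsilon>)"
proof -
  have "\<forall>\<^sub>F S in at_top. S powr (d_low a - \<epsilon>) \<le> Qf a S \<and> Qf a S \<le> S powr (d_low a + \<epsilon>)"
  proof (cases "a < 1/3")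
    case True then show ?thesis using key_small[OF a0 True ev e] by simp
  next
    case False then show ?thesis using key_big[OF _ ev e] by simp
  qed
  moreover have "\<forall>\<^sub>F S::real in at_top. S > 1" by (rule eventually_gt_at_top)
  ultimately show ?thesis by eventually_elim auto
qed

theorem lemma2:
  fixes \<alpha> :: real
  assumes "\<alpha> \<ge> 0"
    and "eventually (\<lambda>snr. \<exists>!\<rho>. 0 < \<rho> \<and> \<rho> < 1 \<and> kramer_eq \<alpha> snr \<rho>) at_top"
  shows "((\<lambda>snr. R_sym \<alpha> snr / log 2 snr) \<longlongrightarrow> d_low \<alpha>) at_top"
proof -
  have R: "R_sym \<alpha> S = log 2 (Qf \<alpha> S)" for S
    unfolding R_sym_def Qf_def Let_def by simp
  show ?thesis unfolding R
  proof (rule order_tendstoI)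
    fix y assume y: "y < d_low \<alpha>"
    define \<epsilon> where "\<epsilon> = (d_low \<alpha> - y) / 2"
    have e: "\<epsilon> > 0" using y by (simp add: \<epsilon>_def field_simps)
    from key_all[OF assms e] show "\<forall>\<^sub>F S in at_top. y < log 2 (Qf \<alpha> S) / log 2 S"
    proof eventually_elim
      case (elim S)
      have L: "log 2 S > 0" using elim by simp
      have p: "S powr (d_low \<alpha> - \<epsilon>) > 0" using elim by simp
      have "(d_low \<alpha> - \<epsilon>) * log 2 S = log 2 (S powr (d_low \<alpha> - \<epsilon>))" by (simp add: log_powr)
      also have "\<dots> \<le> log 2 (Qf \<alpha> S)" using elim p
        by (subst log_le_cancel_iff) (auto intro: less_le_trans[OF p])
      finally have "d_low \<alpha> - \<epsilon> \<le> log 2 (Qf \<alpha> S) / log 2 S" using L by (simp add: pos_le_divide_eq)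
      moreover have "y < d_low \<alpha> - \<epsilon>" using y by (simp add: \<epsilon>_def field_simps)
      ultimately show ?case by linarith
    qed
  next
    fix y assume y: "y > d_low \<alpha>"
    define \<epsilon> where "\<epsilon> = (y - d_low \<alpha>) / 2"
    have e: "\<epsilon> > 0" using y by (simp add: \<epsilon>_def field_simps)
    from key_all[OF assms e] show "\<forall>\<^sub>F S in at_top. log 2 (Qf \<alpha> S) / log 2 S < y"
    proof eventually_elim
      case (elim S)
      have L: "log 2 S > 0" using elim by simp
      have p: "S powr (d_low \<alpha> - \<epsilon>) > 0" using elim by simp
      have q: "Qf \<alpha> S > 0" using elim p by linarith
      have "log 2 (Qf \<alpha> S) \<le> log 2 (S powr (d_low \<alpha> + \<epsilon>))" using elim q
        by (subst log_le_cancel_iff) auto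
      also have "\<dots> = (d_low \<alpha> + \<epsilon>) * log 2 S" by (simp add: log_powr)
      finally have "log 2 (Qf \<alpha> S) / log 2 S \<le> d_low \<alpha> + \<epsilon>" using L by (simp add: pos_divide_le_eq)
      moreover have "d_low \<alpha> + \<epsilon> < y" using y by (simp add: \<epsilon>_def field_simps)
      ultimately show ?case by linarith
    qed
  qed
qed

end
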